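(* Consider the problem of minimizing $g(\mathbf{x},\mathbf{y})+f(\mathbf{x})+h(\mathbf{y})$ subject to $\mathbf{A}\mathbf{x}+\mathbf{B}\mathbf{y}=\mathbf{0}$, under the standing assumptions (i)–(iv) below, and let $\{(\mathbf{x}^k,\mathbf{y}^k,\boldsymbol{\gamma}^k)\}_{k\ge 0}$ be generated by the two-block linearized ADMM described below. Let $L_{\mathbf{A}}$ be the largest eigenvalue of $\mathbf{A}^{\rm T}\mathbf{A}$, $\lambda_{\mathbf{B}^{\rm T}\mathbf{B}}$ the smallest eigenvalue of $\mathbf{B}^{\rm T}\mathbf{B}$, and $L_w=L_g+L_h$. Suppose the parameters satisfy $$L_x\ge L_g+\beta L_{\mathbf{A}}+6L_w^2+1,\qquad L_y\ge L_w+L_w^2+3,\qquad C_m=\tfrac{L_y+L_w^2}{2},$$ $$\beta\ge\max\left\{\frac{L_w+L_y+2}{\lambda_{\mathbf{B}^{\rm T}\mathbf{B}}},\ \frac{3(L_w^2+L_y^2)}{\lambda_{\mathbf{B}^{\rm T}\mathbf{B}}C_m},\ \frac{3L_y^2}{\lambda_{\mathbf{B}^{\rm T}\mathbf{B}}}\right\}.$$ Then the sequence $\{L_\beta(\mathbf{x}^k,\mathbf{y}^k,\boldsymbol{\gamma}^k)\}$ is convergent, and $\|\mathbf{y}^{k+1}-\mathbf{y}^k\|$, $\|\mathbf{x}^{k+1}-\mathbf{x}^k\|$ and $\|\boldsymbol{\gamma}^{k+1}-\boldsymbol{\gamma}^k\|$ converge to zero as $k\to\infty$.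
   Context: Variables $\mathbf{x}\in\mathbb{R}^p$, $\mathbf{y}\in\mathbb{R}^q$; given matrices $\mathbf{A}\in\mathbb{R}^{n\times p}$, $\mathbf{B}\in\mathbb{R}^{n\times q}$. The function $f$ may be nonconvex and nonsmooth; $g,h$ are differentiable, possibly nonconvex. A function $s$ is $L$-Lipschitz differentiable if $\|\nabla s(\mathbf{u})-\nabla s(\mathbf{u}')\|_2\le L\|\mathbf{u}-\mathbf{u}'\|_2$ for all $\mathbf{u},\mathbf{u}'$. Standing assumptions: (i) $h$ is $L_h$-Lipschitz differentiable; (ii) $g$ is $L_g$-Lipschitz differentiable (jointly in $(\mathbf{x},\mathbf{y})$); (iii) $g(\mathbf{x},\mathbf{y})+f(\mathbf{x})+h(\mathbf{y})$ is lower bounded on the feasible set $\{(\mathbf{x},\mathbf{y}):\mathbf{A}\mathbf{x}+\mathbf{B}\mathbf{y}=\mathbf{0}\}$ and coercive with respect to $\mathbf{y}$ over it, i.e. for every sequence $(\mathbf{x}^k,\mathbf{y}^k)$ in the feasible set with $\|\mathbf{y}^k\|\to\infty$, the function value tends to $+\infty$; (iv) $\mathbf{B}$ has full column rank and $\mathrm{Im}(\mathbf{A})\subset\mathrm{Im}(\mathbf{B})$. Augmented Lagrangian: $L_\beta(\mathbf{x},\mathbf{y},\boldsymbol{\gamma})=g(\mathbf{x},\mathbf{y})+f(\mathbf{x})+h(\mathbf{y})+\langle\boldsymbol{\gamma},\mathbf{A}\mathbf{x}+\mathbf{B}\mathbf{y}\rangle+\frac{\beta}{2}\|\mathbf{A}\mathbf{x}+\mathbf{B}\mathbf{y}\|_2^2$.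 Algorithm (parameters $L_x,L_y,\beta>0$, arbitrary initial $\mathbf{x}^0,\mathbf{y}^0,\boldsymbol{\gamma}^0$): for $k\ge0$, $\mathbf{x}^{k+1}\in\arg\min_{\mathbf{x}}\bar f^k(\mathbf{x})$, $\mathbf{y}^{k+1}=\arg\min_{\mathbf{y}}\bar h^k(\mathbf{y})$, $\boldsymbol{\gamma}^{k+1}=\boldsymbol{\gamma}^k+\beta(\mathbf{A}\mathbf{x}^{k+1}+\mathbf{B}\mathbf{y}^{k+1})$, where $\bar f^k(\mathbf{x})=f(\mathbf{x})+\langle\boldsymbol{\gamma}^k,\mathbf{A}\mathbf{x}\rangle+\frac{L_x}{2}\|\mathbf{x}-\mathbf{x}^k\|^2+\langle\mathbf{x}-\mathbf{x}^k,\nabla_{\mathbf{x}}g(\mathbf{x}^k,\mathbf{y}^k)+\beta\mathbf{A}^{\rm T}(\mathbf{A}\mathbf{x}^k+\mathbf{B}\mathbf{y}^k)\rangle$ and $\bar h^k(\mathbf{y})=\langle\boldsymbol{\gamma}^k,\mathbf{B}\mathbf{y}\rangle+\frac{L_y}{2}\|\mathbf{y}-\mathbf{y}^k\|^2+\frac{\beta}{2}\|\mathbf{A}\mathbf{x}^{k+1}+\mathbf{B}\mathbf{y}\|^2+\langle\mathbf{y}-\mathbf{y}^k,\nabla_{\mathbf{y}}g(\mathbf{x}^{k+1},\mathbf{y}^k)+\nabla h(\mathbf{y}^k)\rangle$ (the minimizer of $\bar f^k$ is assumed to exist at each step). *)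

theory Defs
  imports "HOL-Analysis.Analysis"
begin

definition is_eigenvalue :: "real^'n^'n \<Rightarrow> real \<Rightarrow> bool" where
  "is_eigenvalue M mu \<longleftrightarrow> (\<exists>v. v \<noteq> 0 \<and> M *v v = mu *s v)"

definition aug_lagr ::
  "((real^'p) \<times> (real^'q) \<Rightarrow> real) \<Rightarrow> (real^'p \<Rightarrow> real) \<Rightarrow> (real^'q \<Rightarrow> real)
   \<Rightarrow> real^'p^'n \<Rightarrow> real^'q^'n \<Rightarrow> real
   \<Rightarrow> real^'p \<Rightarrow> real^'q \<Rightarrow> real^'n \<Rightarrow> real" where
  "aug_lagr g f h A B beta x y gam =
     g (x, y) + f x + h y + gam \<bullet> (A *v x + B *v y)
     + beta / 2 * (norm (A *v x + B *v y))\<^sup>2"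

text \<open>Linearized x-subproblem objective bar f^k (with x^k = xk, y^k = yk, gamma^k = gk,
  Dgx = partial gradient of g in x at (xk,yk)).\<close>
definition fbar ::
  "(real^'p \<Rightarrow> real) \<Rightarrow> real^'p^'n \<Rightarrow> real^'q^'n \<Rightarrow> real \<Rightarrow> real
   \<Rightarrow> real^'p \<Rightarrow> real^'q \<Rightarrow> real^'n \<Rightarrow> real^'p \<Rightarrow> real^'p \<Rightarrow> real" where
  "fbar f A B beta Lx xk yk gk Dgx x =
     f x + gk \<bullet> (A *v x) + Lx / 2 * (norm (x - xk))\<^sup>2
     + (x - xk) \<bullet> (Dgx + beta *s (transpose A *v (A *v xk + B *v yk)))"

text \<open>Linearized y-subproblem objective bar h^k (x1 = x^{k+1}; Dgy = partial gradient
  of g in y at (x^{k+1}, y^k); Dhk = gradient of h at y^k).\<close>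
definition hbar ::
  "real^'p^'n \<Rightarrow> real^'q^'n \<Rightarrow> real \<Rightarrow> real
   \<Rightarrow> real^'p \<Rightarrow> real^'q \<Rightarrow> real^'n \<Rightarrow> real^'q \<Rightarrow> real^'q \<Rightarrow> real^'q \<Rightarrow> real" where
  "hbar A B beta Ly x1 yk gk Dgy Dhk y =
     gk \<bullet> (B *v y) + Ly / 2 * (norm (y - yk))\<^sup>2
     + beta / 2 * (norm (A *v x1 + B *v y))\<^sup>2
     + (y - yk) \<bullet> (Dgy + Dhk)"

end

theory Submission
  imports Defs
begin


lemma descent:
  fixes g :: "'a::real_inner \<Rightarrow> real"
  assumes gd: "\<And>u. (g has_derivative (\<lambda>d. G u \<bullet> d)) (at u)"
    and gl: "\<And>u u'. norm (G u - G u') \<le> L * norm (u - u')" and L0: "L \<ge> 0"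
  shows "\<bar>g (u + d) - g u - G u \<bullet> d\<bar> \<le> L * (norm d)\<^sup>2"
proof -
  define phi where "phi = (\<lambda>t::real. g (u + t *\<^sub>R d))"
  have der: "(phi has_derivative (\<lambda>s. G (u + t *\<^sub>R d) \<bullet> (s *\<^sub>R d))) (at t within {0..1})" for t
  proof -
    have "((\<lambda>t. u + t *\<^sub>R d) has_derivative (\<lambda>s. s *\<^sub>R d)) (at t within {0..1})"
      by (auto intro!: derivative_eq_intros)
    from diff_chain_within[OF this has_derivative_at_withinI[OF gd]] show ?thesis by (simp add: phi_def o_def)
  qed
  obtain t where t: "t \<in> {0..1}" and eq: "phi 1 - phi 0 = G (u + t *\<^sub>R d) \<bullet> ((1 - 0) *\<^sub>R d)"
    using mvt_very_simple[of 0 1 phi, OF _ der] by auto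
  have "\<bar>G (u + t *\<^sub>R d) \<bullet> d - G u \<bullet> d\<bar> = \<bar>(G (u + t *\<^sub>R d) - G u) \<bullet> d\<bar>"
    by (simp add: inner_diff_left)
  also have "\<dots> \<le> norm (G (u + t *\<^sub>R d) - G u) * norm d" by (rule Cauchy_Schwarz_ineq2)
  also have "\<dots> \<le> L * norm (t *\<^sub>R d) * norm d"
    using gl[of "u + t *\<^sub>R d" u] by (simp add: mult_right_mono)
  also have "\<dots> \<le> L * (norm d)\<^sup>2"
    using t L0 by (simp add: power2_eq_square mult_left_le_one_le mult_le_cancel_right1 mult.assoc mult_left_mono)
  finally show ?thesis using eq by (simp add: phi_def)
qed

lemma quad_zero:
  fixes a b :: real
  assumes h: "\<And>t. 0 \<le> t * a + t\<^sup>2 * b"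
  shows "a = 0"
proof (rule ccontr)
  assume a: "a \<noteq> 0"
  define q where "q = \<bar>b\<bar> + 1"
  have q: "q > 0" "\<bar>b\<bar> < q" by (auto simp: q_def)
  define t where "t = - a / q"
  have "t\<^sup>2 * b \<le> t\<^sup>2 * \<bar>b\<bar>" by (simp add: mult_left_mono)
  also have "\<dots> < t\<^sup>2 * q" using a q by (simp add: t_def)
  also have "t\<^sup>2 * q = a\<^sup>2 / q" using q by (simp add: t_def power2_eq_square field_simps)
  finally have "t * a + t\<^sup>2 * b < 0" using q by (simp add: t_def power2_eq_square field_simps)
  with h[of t] show False by simp
qed

lemma sym_inner:
  fixes M :: "real^'n^'n"
  assumes "transpose M = M"
  shows "x \<bullet> (M *v y) = (M *v x) \<bullet> y"
  by (metis assms dot_lmul_matrix transpose_matrix_vector)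

lemma rayleigh_min:
  fixes M :: "real^'n^'n"
  assumes sym: "transpose M = M"
  shows "\<exists>mu. is_eigenvalue M mu \<and> (\<forall>v. mu * (norm v)\<^sup>2 \<le> v \<bullet> (M *v v))"
proof -
  let ?q = "\<lambda>v. v \<bullet> (M *v v)"
  have cont: "continuous_on (sphere 0 1) ?q"
    by (intro continuous_on_inner continuous_on_id matrix_vector_mult_linear_continuous_on[THEN continuous_on_compose2[of UNIV]]) auto
  have ne: "sphere (0::real^'n) 1 \<noteq> {}"
    by (metis norm_axis_1 mem_sphere_0 empty_iff)
  obtain v0 where v0: "v0 \<in> sphere 0 1" and mn: "\<And>y. y \<in> sphere 0 1 \<Longrightarrow> ?q v0 \<le> ?q y"
    using continuous_attains_inf[OF compact_sphere ne cont] by blast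
  define mu where "mu = ?q v0"
  have n1: "norm v0 = 1" using v0 by simp
  have lb: "mu * (norm v)\<^sup>2 \<le> ?q v" for v
  proof (cases "v = 0")
    case True then show ?thesis by simp
  next
    case False
    define u where "u = (1 / norm v) *\<^sub>R v"
    have "u \<in> sphere 0 1" using False by (simp add: u_def)
    then have "mu \<le> ?q u" using mn mu_def by simp
    also have "?q u = ?q v / (norm v)\<^sup>2"
      by (simp add: u_def matrix_vector_mult_scaleR power2_eq_square)
    finally show ?thesis using False by (simp add: field_simps)
  qed
  define w where "w = M *v v0 - mu *\<^sub>R v0"
  have "0 \<le> t * (2 * (norm w)\<^sup>2) + t\<^sup>2 * (?q w - mu * (norm w)\<^sup>2)" for t
  proof -
    have "0 \<le> ?q (v0 + t *\<^sub>R w) - mu * (norm (v0 + t *\<^sub>R w))\<^sup>2" using lb[of "v0 + t *\<^sub>R w"] by simp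
    also have "?q (v0 + t *\<^sub>R w) = mu + t * (v0 \<bullet> (M *v w)) + t * (w \<bullet> (M *v v0)) + t\<^sup>2 * ?q w"
      by (simp add: mu_def matrix_vector_right_distrib matrix_vector_mult_scaleR inner_add_left inner_add_right power2_eq_square algebra_simps)
    also have "v0 \<bullet> (M *v w) = w \<bullet> (M *v v0)" using sym_inner[OF sym] by (simp add: inner_commute)
    also have "(norm (v0 + t *\<^sub>R w))\<^sup>2 = 1 + 2 * t * (v0 \<bullet> w) + t\<^sup>2 * (norm w)\<^sup>2"
    proof -
      have "(norm (v0 + t *\<^sub>R w))\<^sup>2 = v0 \<bullet> v0 + 2 * t * (v0 \<bullet> w) + t\<^sup>2 * (w \<bullet> w)"
        unfolding power2_norm_eq_inner by (simp add: inner_add_left inner_add_right power2_eq_square algebra_simps inner_commute)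
      then show ?thesis using n1 by (simp add: power2_norm_eq_inner[symmetric])
    qed
    also have "w \<bullet> (M *v v0) = (norm w)\<^sup>2 + mu * (v0 \<bullet> w)"
      by (simp add: w_def power2_norm_eq_inner inner_diff_left inner_diff_right algebra_simps inner_commute)
    finally show ?thesis by (simp add: algebra_simps power2_eq_square)
  qed
  from quad_zero[OF this] have "w = 0" by simp
  then have "M *v v0 = mu *s v0" by (simp add: w_def scalar_mult_eq_scaleR)
  moreover have "v0 \<noteq> 0" using n1 by auto
  ultimately show ?thesis using lb unfolding is_eigenvalue_def by blast
qed


lemma inner_transpose: "(transpose A *v u) \<bullet> v = u \<bullet> ((A::real^'a^'b) *v v)"
  by (simp add: dot_lmul_matrix)

lemma step1:
  fixes A :: "real^'p^'n" and B :: "real^'q^'n"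
  assumes gdesc: "g (x1, y0) \<le> g (x0, y0) + Gx \<bullet> (x1 - x0) + Lg * (norm (x1 - x0))\<^sup>2"
    and Ab: "(norm (A *v (x1 - x0)))\<^sup>2 \<le> LA * (norm (x1 - x0))\<^sup>2"
    and fmin: "fbar f A B beta Lx x0 y0 gk Gx x1 \<le> fbar f A B beta Lx x0 y0 gk Gx x0"
    and b: "beta > 0"
  shows "aug_lagr g f h A B beta x1 y0 gk \<le> aug_lagr g f h A B beta x0 y0 gk
           - (Lx / 2 - Lg - beta * LA / 2) * (norm (x1 - x0))\<^sup>2"
proof -
  define d where "d = x1 - x0"
  define r where "r = A *v x0 + B *v y0"
  have x1: "x1 = x0 + d" by (simp add: d_def)
  have e1: "A *v x1 + B *v y0 = r + A *v d" by (simp add: x1 r_def matrix_vector_right_distrib)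
  have e2: "(norm (r + A *v d))\<^sup>2 = (norm r)\<^sup>2 + 2 * ((transpose A *v r) \<bullet> d) + (norm (A *v d))\<^sup>2"
    unfolding power2_norm_eq_inner inner_transpose
    by (simp add: inner_add_left inner_add_right inner_commute)
  have e3: "gk \<bullet> (A *v x1 + B *v y0) = gk \<bullet> (A *v x1) + gk \<bullet> (B *v y0)" by (simp add: inner_add_right)
  have e4: "d \<bullet> (Gx + beta *s (transpose A *v r)) = Gx \<bullet> d + beta * ((transpose A *v r) \<bullet> d)"
    by (simp add: scalar_mult_eq_scaleR inner_add_right inner_commute)
  have fm: "f x1 + gk \<bullet> (A *v x1) + Lx / 2 * (norm d)\<^sup>2 + (Gx \<bullet> d + beta * ((transpose A *v r) \<bullet> d))
        \<le> f x0 + gk \<bullet> (A *v x0)"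
    using fmin e4 unfolding fbar_def by (simp add: d_def r_def)
  have Ab': "beta / 2 * (norm (A *v d))\<^sup>2 \<le> beta / 2 * (LA * (norm d)\<^sup>2)"
    using Ab b by (simp add: d_def)
  have e5: "gk \<bullet> (A *v x0 + B *v y0) = gk \<bullet> (A *v x0) + gk \<bullet> (B *v y0)" by (simp add: inner_add_right)
  have e6: "beta / 2 * (norm (r + A *v d))\<^sup>2 = beta / 2 * (norm r)\<^sup>2 + beta * ((transpose A *v r) \<bullet> d) + beta / 2 * (norm (A *v d))\<^sup>2"
    unfolding e2 by (simp add: algebra_simps)
  have e7: "gk \<bullet> (A *v x1) = gk \<bullet> (A *v x0) + gk \<bullet> (A *v d)"
    by (simp add: x1 matrix_vector_right_distrib inner_add_right)
  have a1: "aug_lagr g f h A B beta x1 y0 gk = g (x1, y0) + f x1 + h y0 + gk \<bullet> (A *v x1) + gk \<bullet> (B *v y0)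
     + (beta / 2 * (norm r)\<^sup>2 + beta * ((transpose A *v r) \<bullet> d) + beta / 2 * (norm (A *v d))\<^sup>2)"
    unfolding aug_lagr_def e3 unfolding e1 e6 by simp
  have a0: "aug_lagr g f h A B beta x0 y0 gk = g (x0, y0) + f x0 + h y0 + gk \<bullet> (A *v x0) + gk \<bullet> (B *v y0)
     + beta / 2 * (norm r)\<^sup>2"
    unfolding aug_lagr_def e5 r_def by simp
  have "beta / 2 * (LA * (norm d)\<^sup>2) = (beta * LA / 2) * (norm d)\<^sup>2" by simp
  then show ?thesis
    unfolding a1 a0 d_def[symmetric] using gdesc fm Ab' unfolding d_def[symmetric]
    by (simp only: left_diff_distrib)
qed
lemma step2:
  fixes A :: "real^'p^'n" and B :: "real^'q^'n"
  assumes ymin: "\<And>y. hbar A B beta Ly x1 y0 gk Dgy Dhk y1 \<le> hbar A B beta Ly x1 y0 gk Dgy Dhk y"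
    and g1: "g1 = gk + beta *s (A *v x1 + B *v y1)"
    and Bb: "\<And>v. lamB * (norm v)\<^sup>2 \<le> (norm (B *v v))\<^sup>2"
    and desc: "g (x1, y1) + h y1 \<le> g (x1, y0) + h y0 + (Dgy + Dhk) \<bullet> (y1 - y0) + Lw * (norm (y1 - y0))\<^sup>2"
    and b: "beta > 0"
  shows "transpose B *v g1 = - (Ly *\<^sub>R (y1 - y0) + (Dgy + Dhk))"
    and "aug_lagr g f h A B beta x1 y1 gk \<le> aug_lagr g f h A B beta x1 y0 gk
           - (Ly - Lw + beta * lamB / 2) * (norm (y1 - y0))\<^sup>2"
proof -
  define G where "G = Dgy + Dhk"
  define r where "r = A *v x1 + B *v y1"
  define D where "D = transpose B *v g1 + Ly *\<^sub>R (y1 - y0) + G"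
  define H where "H = hbar A B beta Ly x1 y0 gk Dgy Dhk"
  define Q where "Q = (\<lambda>v. Ly / 2 * (norm v)\<^sup>2 + beta / 2 * (norm (B *v v))\<^sup>2)"
  have Bg1: "transpose B *v g1 = transpose B *v gk + beta *\<^sub>R (transpose B *v r)"
    by (simp add: g1 r_def scalar_mult_eq_scaleR matrix_vector_right_distrib matrix_vector_mult_scaleR)
  have exp: "H (y1 + v) = H y1 + D \<bullet> v + Q v" for v
  proof -
    have a1: "gk \<bullet> (B *v (y1 + v)) = gk \<bullet> (B *v y1) + (transpose B *v gk) \<bullet> v"
      by (simp add: dot_lmul_matrix matrix_vector_right_distrib inner_add_right)
    have a2: "(norm (y1 + v - y0))\<^sup>2 = (norm (y1 - y0))\<^sup>2 + 2 * ((y1 - y0) \<bullet> v) + (norm v)\<^sup>2"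
    proof -
      have e: "y1 + v - y0 = (y1 - y0) + v" by simp
      have "(norm ((y1 - y0) + v))\<^sup>2 = (norm (y1 - y0))\<^sup>2 + 2 * ((y1 - y0) \<bullet> v) + (norm v)\<^sup>2"
        unfolding power2_norm_eq_inner by (simp add: inner_add_left inner_add_right inner_commute)
      then show ?thesis unfolding e .
    qed
    have a3: "(norm (A *v x1 + B *v (y1 + v)))\<^sup>2 = (norm r)\<^sup>2 + 2 * ((transpose B *v r) \<bullet> v) + (norm (B *v v))\<^sup>2"
    proof -
      have "A *v x1 + B *v (y1 + v) = r + B *v v" by (simp add: r_def matrix_vector_right_distrib)
      then show ?thesis unfolding power2_norm_eq_inner inner_transpose by (simp add: inner_add_left inner_add_right inner_commute)
    qed
    have a4: "(y1 + v - y0) \<bullet> G = (y1 - y0) \<bullet> G + v \<bullet> G"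
      by (simp add: inner_diff_left inner_add_left)
    have a5: "D \<bullet> v = (transpose B *v gk) \<bullet> v + beta * ((transpose B *v r) \<bullet> v) + Ly * ((y1 - y0) \<bullet> v) + G \<bullet> v"
      unfolding D_def Bg1 by (simp add: inner_add_left)
    show ?thesis
      unfolding H_def hbar_def a1 a2 a3 G_def[symmetric] a4 a5 Q_def r_def[symmetric]
      by (simp add: algebra_simps inner_commute)
  qed
  have "0 \<le> t * (norm D)\<^sup>2 + t\<^sup>2 * Q D" for t
  proof -
    have "H y1 \<le> H (y1 + t *\<^sub>R D)" using ymin H_def by simp
    also have "\<dots> = H y1 + t * (norm D)\<^sup>2 + t\<^sup>2 * Q D"
      by (simp add: exp Q_def matrix_vector_mult_scaleR power2_norm_eq_inner[symmetric] power_mult_distrib algebra_simps)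
    finally show ?thesis by simp
  qed
  from quad_zero[OF this] have D0: "D = 0" by simp
  then show "transpose B *v g1 = - (Ly *\<^sub>R (y1 - y0) + (Dgy + Dhk))"
    unfolding eq_neg_iff_add_eq_0 using D0 unfolding D_def G_def by (simp only: add.assoc)
  define d where "d = y1 - y0"
  have Hy0: "H y0 = H y1 + Q (- d)" using exp[of "- d"] D0 by (simp add: d_def)
  have Qd: "Q (- d) \<ge> Ly / 2 * (norm d)\<^sup>2 + beta / 2 * (lamB * (norm d)\<^sup>2)"
    using Bb[of "- d"] b by (simp add: Q_def)
  have aH: "aug_lagr g f h A B beta x1 y gk = H y - Ly / 2 * (norm (y - y0))\<^sup>2 - (y - y0) \<bullet> G
            + g (x1, y) + h y + f x1 + gk \<bullet> (A *v x1)" for y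
    unfolding aug_lagr_def H_def hbar_def G_def by (simp add: inner_add_right)
  have "aug_lagr g f h A B beta x1 y1 gk - aug_lagr g f h A B beta x1 y0 gk
     = H y1 - H y0 - Ly / 2 * (norm d)\<^sup>2 - d \<bullet> G + (g (x1, y1) + h y1) - (g (x1, y0) + h y0)"
    unfolding aH d_def by simp
  also have "\<dots> \<le> - (Ly - Lw + beta * lamB / 2) * (norm d)\<^sup>2"
    using Hy0 Qd desc unfolding d_def[symmetric] G_def[symmetric] by (simp add: algebra_simps inner_commute)
  finally show "aug_lagr g f h A B beta x1 y1 gk \<le> aug_lagr g f h A B beta x1 y0 gk
           - (Ly - Lw + beta * lamB / 2) * (norm (y1 - y0))\<^sup>2" by (simp add: d_def algebra_simps)
qed


lemma quadform_AtA:
  fixes A :: "real^'p^'n"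
  shows "v \<bullet> ((transpose A ** A) *v v) = (norm (A *v v))\<^sup>2"
proof -
  have "(transpose A ** A) *v v = transpose A *v (A *v v)" by (simp add: matrix_vector_mul_assoc)
  then show ?thesis
    by (simp add: power2_norm_eq_inner dot_lmul_matrix[symmetric] inner_commute)
qed

lemma sym_AtA: "transpose (transpose A ** (A::real^'p^'n)) = transpose A ** A"
  by (simp add: matrix_transpose_mul)

lemma neg_mv: "(- M) *v v = - ((M::real^'a^'b) *v v)"
  by (simp add: matrix_vector_mult_def vec_eq_iff sum_negf)

lemma A_bound:
  fixes A :: "real^'p^'n"
  assumes LA_max: "\<And>mu. is_eigenvalue (transpose A ** A) mu \<Longrightarrow> mu \<le> LA"
  shows "(norm (A *v v))\<^sup>2 \<le> LA * (norm v)\<^sup>2"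
proof -
  let ?M = "transpose A ** A"
  have s: "transpose (- ?M) = - ?M"
    using sym_AtA[of A] by (simp add: transpose_def vec_eq_iff)
  obtain mu where e: "is_eigenvalue (- ?M) mu" and l: "\<And>v. mu * (norm v)\<^sup>2 \<le> v \<bullet> ((- ?M) *v v)"
    using rayleigh_min[OF s] by blast
  have "is_eigenvalue ?M (- mu)"
    using e unfolding is_eigenvalue_def neg_mv
    by (metis minus_equation_iff scalar_mult_eq_scaleR scaleR_minus_left)
  then have "- mu \<le> LA" by (rule LA_max)
  have "mu * (norm v)\<^sup>2 \<le> - (norm (A *v v))\<^sup>2" using l[of v] by (simp add: neg_mv quadform_AtA)
  then have "(norm (A *v v))\<^sup>2 \<le> (- mu) * (norm v)\<^sup>2" by simp
  also have "\<dots> \<le> LA * (norm v)\<^sup>2" using mult_right_mono[OF \<open>- mu \<le> LA\<close>, of "(norm v)\<^sup>2"] by simp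
  finally show ?thesis .
qed

lemma B_bound:
  fixes B :: "real^'q^'n"
  assumes lamB_min: "\<And>mu. is_eigenvalue (transpose B ** B) mu \<Longrightarrow> lamB \<le> mu"
  shows "lamB * (norm v)\<^sup>2 \<le> (norm (B *v v))\<^sup>2"
proof -
  obtain mu where e: "is_eigenvalue (transpose B ** B) mu" and l: "\<And>v. mu * (norm v)\<^sup>2 \<le> v \<bullet> ((transpose B ** B) *v v)"
    using rayleigh_min[OF sym_AtA] by blast
  have "lamB * (norm v)\<^sup>2 \<le> mu * (norm v)\<^sup>2" using lamB_min[OF e] by (simp add: mult_right_mono)
  also have "\<dots> \<le> (norm (B *v v))\<^sup>2" using l[of v] by (simp add: quadform_AtA)
  finally show ?thesis .
qed

lemma lamB_pos:
  fixes B :: "real^'q^'n"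
  assumes "rank B = CARD('q)" and "is_eigenvalue (transpose B ** B) lamB"
  shows "lamB > 0"
proof -
  obtain v where v: "v \<noteq> 0" "(transpose B ** B) *v v = lamB *s v"
    using assms(2) unfolding is_eigenvalue_def by blast
  have inj: "inj ((*v) B)" using assms(1) full_rank_injective by blast
  have "B *v v \<noteq> 0" using inj v(1) by (metis injD matrix_vector_mult_0_right)
  then have "0 < (norm (B *v v))\<^sup>2" by simp
  also have "\<dots> = lamB * (norm v)\<^sup>2"
    using quadform_AtA[of v B] v(2) by (simp add: scalar_mult_eq_scaleR power2_norm_eq_inner)
  finally show ?thesis using v(1) by (simp add: zero_less_mult_iff)
qed

lemma BT_bound:
  fixes B :: "real^'q^'n"
  assumes Bb: "\<And>v. lamB * (norm v)\<^sup>2 \<le> (norm (B *v v))\<^sup>2" and lp: "lamB > 0"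
    and w: "w = B *v u"
  shows "lamB * (norm w)\<^sup>2 \<le> (norm (transpose B *v w))\<^sup>2"
proof (cases "u = 0")
  case True then show ?thesis using w by simp
next
  case False
  define a where "a = (norm w)\<^sup>2"
  have a0: "a \<ge> 0" by (simp add: a_def)
  have ae: "a = u \<bullet> (transpose B *v w)"
    by (simp add: a_def w power2_norm_eq_inner dot_lmul_matrix[symmetric] inner_commute)
  have cs: "a \<le> norm u * norm (transpose B *v w)" using ae Cauchy_Schwarz_ineq2[of u "transpose B *v w"] by linarith
  have lb: "lamB * (norm u)\<^sup>2 \<le> a" using Bb[of u] by (simp add: a_def w)
  have nu: "norm u > 0" using False by simp
  have "lamB * a * (norm u)\<^sup>2 \<le> a * a" using lb a0 by (metis mult.commute mult.left_commute mult_left_mono)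
  also have "\<dots> \<le> (norm u * norm (transpose B *v w))\<^sup>2"
    using cs a0 by (simp add: power2_eq_square mult_mono)
  finally have "lamB * a * (norm u)\<^sup>2 \<le> (norm (transpose B *v w))\<^sup>2 * (norm u)\<^sup>2"
    by (simp add: power_mult_distrib mult.commute)
  then show ?thesis using nu by (simp add: a_def)
qed


lemma lin1:
  fixes a b c m p q y :: real
  shows "4 * a = 2 * b + 2 * c \<Longrightarrow> 3 * (q + y) \<le> m \<Longrightarrow> p \<le> y \<Longrightarrow> c \<le> p \<Longrightarrow> 0 \<le> 3 * y - 4 * b
    \<Longrightarrow> 0 \<le> q \<Longrightarrow> q + 2 * b + y \<le> 2 * m - 4 * a"
  by (smt (verit))

lemma lin2:
  fixes L1 L2 G S A1 A2 A3 cxX1 u w X1 v cyD1 z1 z2 D1 CmD1 CmD0 :: real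
  shows "L2 \<le> L1 - cxX1 - cyD1 + G \<Longrightarrow> G \<le> S \<Longrightarrow> A1 \<le> D1 \<Longrightarrow> A2 \<le> CmD0 \<Longrightarrow> A3 \<le> w
    \<Longrightarrow> S = A1 + A2 + A3 \<Longrightarrow> u \<le> cxX1 \<Longrightarrow> u = 3 * w + X1 / 2 - v / 2 \<Longrightarrow> z1 \<le> cyD1
    \<Longrightarrow> z2 \<le> z1 \<Longrightarrow> z2 = 2 * D1 + CmD1
    \<Longrightarrow> L2 + CmD1 \<le> L1 + CmD0 - (2 * w + X1 / 2 - v / 2) - D1"
  by (smt (verit))

lemma lower_quad:
  fixes Lw Ly Cm bl s t :: real
  assumes Lw: "Lw \<ge> 0" and Ly: "Ly \<ge> Lw + Lw\<^sup>2 + 3" and Cm: "Cm = (Ly + Lw\<^sup>2) / 2"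
    and b1: "bl \<ge> Lw + Ly + 2" and b2: "bl * Cm \<ge> 3 * (Lw\<^sup>2 + Ly\<^sup>2)"
  shows "Cm * s\<^sup>2 - (Lw + Ly) * s * t + (bl / 2 - Lw) * t\<^sup>2 \<ge> 0"
proof -
  define P where "P = bl - 2 * Lw"
  define K where "K = Lw + Ly"
  have l2: "Lw\<^sup>2 \<ge> 0" by simp
  have P: "P > 0" using b1 Ly Lw l2 unfolding P_def by linarith
  have Ly0: "Ly \<ge> 0" "Ly \<ge> Lw" "Ly \<ge> Lw\<^sup>2" using Ly Lw l2 by linarith+
  have f1: "Ly * Ly \<ge> Ly * Lw\<^sup>2" using Ly0 by (simp add: mult_left_mono)
  have f2: "Ly * Lw\<^sup>2 \<ge> Lw * Lw\<^sup>2" using Ly0 by (simp add: mult_right_mono)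
  have f3: "3 * Ly - 4 * Lw \<ge> 0"
  proof -
    have "(Lw - 1)\<^sup>2 \<ge> 0" by simp
    then have "Lw\<^sup>2 \<ge> 2 * Lw - 1" by (simp add: power2_diff)
    then have "3 * Lw\<^sup>2 - Lw + 9 \<ge> 0" using Lw by linarith
    then show ?thesis using Ly by linarith
  qed
  have f4: "Ly * (3 * Ly - 4 * Lw) \<ge> 0" using f3 Ly0 by simp
  have key: "2 * Cm * P \<ge> K\<^sup>2"
  proof -
    have e1: "2 * Cm * P = 2 * (bl * Cm) - 4 * (Lw * Cm)" by (simp add: P_def algebra_simps)
    have e2: "4 * (Lw * Cm) = 2 * (Lw * Ly) + 2 * (Lw * Lw\<^sup>2)" by (simp add: Cm algebra_simps)
    have e3: "K\<^sup>2 = Lw\<^sup>2 + 2 * (Lw * Ly) + Ly\<^sup>2" by (simp add: K_def power2_eq_square algebra_simps)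
    have g1: "Ly\<^sup>2 \<ge> Ly * Lw\<^sup>2" using f1 by (simp add: power2_eq_square)
    have g4: "3 * Ly\<^sup>2 - 4 * (Lw * Ly) \<ge> 0" using f4 by (simp add: power2_eq_square algebra_simps)
    have g2: "Ly * Lw\<^sup>2 \<ge> Lw * Lw\<^sup>2" by (rule f2)
    show ?thesis unfolding e1 e3 using lin1[OF e2 b2 g1 g2 g4 l2] .
  qed
  have "2 * P * (Cm * s\<^sup>2 - K * s * t + (P / 2) * t\<^sup>2) = (2 * Cm * P - K\<^sup>2) * s\<^sup>2 + (K * s - P * t)\<^sup>2"
    by (simp add: power2_eq_square algebra_simps)
  also have "\<dots> \<ge> 0" using key by simp
  finally have "0 \<le> Cm * s\<^sup>2 - K * s * t + (P / 2) * t\<^sup>2" using P by (simp add: zero_le_mult_iff)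
  moreover have "P / 2 = bl / 2 - Lw" by (simp add: P_def)
  ultimately show ?thesis by (simp add: K_def)
qed

lemma lyap_ineq:
  fixes L1 L2 X1 D0 D1 Gm cx cy Lw Ly Cm bl beta lamB Lg :: real
  assumes Lw: "Lw \<ge> 0" and Ly: "Ly \<ge> Lw + Lw\<^sup>2 + 3" and Cm: "Cm = (Ly + Lw\<^sup>2) / 2"
    and bl: "bl = beta * lamB" and b: "beta > 0" "lamB > 0"
    and b1: "bl \<ge> Lw + Ly + 2" and b2: "bl * Cm \<ge> 3 * (Lw\<^sup>2 + Ly\<^sup>2)" and b3: "bl \<ge> 3 * Ly\<^sup>2"
    and nn: "X1 \<ge> 0" "D0 \<ge> 0" "D1 \<ge> 0"
    and cx: "cx \<ge> (6 * Lw\<^sup>2 + 1 - Lw) / 2" and cy: "cy \<ge> Ly - Lw + bl / 2"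
    and dec: "L2 \<le> L1 - cx * X1 - cy * D1 + Gm / beta"
    and gm: "lamB * Gm \<le> 3 * (Ly\<^sup>2 * D1 + Ly\<^sup>2 * D0 + Lw\<^sup>2 * (X1 + D0))"
  shows "L2 + Cm * D1 \<le> L1 + Cm * D0 - ((4 * Lw\<^sup>2 + 1 - Lw) / 2) * X1 - D1"
proof -
  have blp: "bl > 0" using bl b by simp
  have g1: "Gm / beta \<le> 3 * (Ly\<^sup>2 * D1 + Ly\<^sup>2 * D0 + Lw\<^sup>2 * (X1 + D0)) / bl"
    using gm b unfolding bl by (simp add: field_simps)
  have t1: "3 * (Ly\<^sup>2 * D1) / bl \<le> D1"
    using b3 blp nn mult_left_mono[OF b3, of D1] by (simp add: field_simps)
  have t2: "3 * ((Ly\<^sup>2 + Lw\<^sup>2) * D0) / bl \<le> Cm * D0"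
    using b2 blp nn mult_left_mono[OF b2, of D0] by (simp add: field_simps algebra_simps)
  have t3: "3 * (Lw\<^sup>2 * X1) / bl \<le> Lw\<^sup>2 * X1"
  proof -
    have "bl \<ge> 3" using b1 Ly Lw zero_le_power2[of Lw] by linarith
    then show ?thesis using blp nn by (simp add: field_simps mult_right_mono mult_left_mono)
  qed
  have sp: "3 * (Ly\<^sup>2 * D1 + Ly\<^sup>2 * D0 + Lw\<^sup>2 * (X1 + D0)) / bl
     = 3 * (Ly\<^sup>2 * D1) / bl + 3 * ((Ly\<^sup>2 + Lw\<^sup>2) * D0) / bl + 3 * (Lw\<^sup>2 * X1) / bl"
    using blp by (simp add: field_simps)
  have cxX0: "cx * X1 \<ge> (6 * Lw\<^sup>2 + 1 - Lw) / 2 * X1" by (rule mult_right_mono[OF cx nn(1)])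
  have cxe: "(6 * Lw\<^sup>2 + 1 - Lw) / 2 * X1 = 3 * (Lw\<^sup>2 * X1) + X1 / 2 - Lw * X1 / 2" by (simp add: field_simps)
  have cyD: "cy * D1 \<ge> (Ly - Lw + bl / 2) * D1" by (rule mult_right_mono[OF cy nn(3)])
  have cyD2: "(Ly - Lw + bl / 2) * D1 \<ge> (2 + Cm) * D1"
  proof -
    have "4 + Lw\<^sup>2 + 2 * Lw \<le> Ly + bl" using b1 Ly Lw zero_le_power2[of Lw] by linarith
    then have "Ly - Lw + bl / 2 \<ge> 2 + Cm" unfolding Cm by (simp add: field_simps)
    then show ?thesis using nn by (simp add: mult_right_mono)
  qed
  have cye: "(2 + Cm) * D1 = 2 * D1 + Cm * D1" by (simp add: algebra_simps)
  have t2e: "3 * ((Ly\<^sup>2 + Lw\<^sup>2) * D0) / bl \<le> Cm * D0" by (rule t2)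
  have goal: "((4 * Lw\<^sup>2 + 1 - Lw) / 2) * X1 = 2 * (Lw\<^sup>2 * X1) + X1 / 2 - Lw * X1 / 2" by (simp add: field_simps)
  show ?thesis unfolding goal by (rule lin2[OF dec g1 t1 t2e t3 sp cxX0 cxe cyD cyD2 cye])
qed

lemma lin3:
  fixes Lx Lg m q w :: real
  shows "Lx \<ge> Lg + m + 6 * q + 1 \<Longrightarrow> Lg \<le> w \<Longrightarrow> (6 * q + 1 - w) / 2 \<le> Lx / 2 - Lg - m / 2"
  by (simp add: field_simps)

lemma sq3: fixes a b c :: real shows "(a + b + c)\<^sup>2 \<le> 3 * (a\<^sup>2 + b\<^sup>2 + c\<^sup>2)"
proof -
  have "3 * (a\<^sup>2 + b\<^sup>2 + c\<^sup>2) - (a + b + c)\<^sup>2 = (a - b)\<^sup>2 + (b - c)\<^sup>2 + (a - c)\<^sup>2"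
    by (simp add: power2_eq_square algebra_simps)
  moreover have "(a - b)\<^sup>2 + (b - c)\<^sup>2 + (a - c)\<^sup>2 \<ge> 0" by simp
  ultimately show ?thesis by linarith
qed

lemma norm_snd_diff: "norm (snd p - snd p') \<le> norm (p - (p'::'a::real_normed_vector \<times> 'b::real_normed_vector))"
proof -
  have e: "(fst (p - p'), snd (p - p')) = p - p'" by (rule prod.collapse)
  have "norm (snd (p - p')) \<le> norm (p - p')" using norm_snd_le[of "snd (p - p')" "fst (p - p')"] unfolding e .
  then show ?thesis by simp
qed



theorem theorem1:
  fixes g :: "(real^'p) \<times> (real^'q) \<Rightarrow> real"
    and Dg :: "(real^'p) \<times> (real^'q) \<Rightarrow> (real^'p) \<times> (real^'q)"
    and f :: "real^'p \<Rightarrow> real"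
    and h :: "real^'q \<Rightarrow> real" and Dh :: "real^'q \<Rightarrow> real^'q"
    and A :: "real^'p^'n" and B :: "real^'q^'n"
    and Lg Lh Lx Ly beta LA lamB :: real
    and xs :: "nat \<Rightarrow> real^'p" and ys :: "nat \<Rightarrow> real^'q" and gs :: "nat \<Rightarrow> real^'n"
  assumes g_grad: "\<And>u. (g has_derivative (\<lambda>d. Dg u \<bullet> d)) (at u)"
    and g_lip: "\<And>u u'. norm (Dg u - Dg u') \<le> Lg * norm (u - u')"
    and h_grad: "\<And>y. (h has_derivative (\<lambda>d. Dh y \<bullet> d)) (at y)"
    and h_lip: "\<And>y y'. norm (Dh y - Dh y') \<le> Lh * norm (y - y')"
    and Lg_nonneg: "Lg \<ge> 0" and Lh_nonneg: "Lh \<ge> 0"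
    and lower_bdd: "\<exists>c. \<forall>x y. A *v x + B *v y = 0 \<longrightarrow> c \<le> g (x, y) + f x + h y"
    and coercive: "\<And>u v. (\<forall>k. A *v u k + B *v v k = 0) \<Longrightarrow>
                      filterlim (\<lambda>k. norm (v k)) at_top sequentially \<Longrightarrow>
                      filterlim (\<lambda>k. g (u k, v k) + f (u k) + h (v k)) at_top sequentially"
    and B_rank: "rank B = CARD('q)"
    and img: "range (\<lambda>x. A *v x) \<subseteq> range (\<lambda>y. B *v y)"
    and LA_eig: "is_eigenvalue (transpose A ** A) LA"
    and LA_max: "\<And>mu. is_eigenvalue (transpose A ** A) mu \<Longrightarrow> mu \<le> LA"
    and lamB_eig: "is_eigenvalue (transpose B ** B) lamB"
    and lamB_min: "\<And>mu. is_eigenvalue (transpose B ** B) mu \<Longrightarrow> lamB \<le> mu"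
    and pos: "Lx > 0" "Ly > 0" "beta > 0"
    and Lx_cond: "Lx \<ge> Lg + beta * LA + 6 * (Lg + Lh)\<^sup>2 + 1"
    and Ly_cond: "Ly \<ge> (Lg + Lh) + (Lg + Lh)\<^sup>2 + 3"
    and beta_cond: "beta \<ge> Max {((Lg + Lh) + Ly + 2) / lamB,
                                3 * ((Lg + Lh)\<^sup>2 + Ly\<^sup>2) / (lamB * ((Ly + (Lg + Lh)\<^sup>2) / 2)),
                                3 * Ly\<^sup>2 / lamB}"
    and x_step: "\<And>k x. fbar f A B beta Lx (xs k) (ys k) (gs k) (fst (Dg (xs k, ys k))) (xs (Suc k))
                      \<le> fbar f A B beta Lx (xs k) (ys k) (gs k) (fst (Dg (xs k, ys k))) x"
    and y_step: "\<And>k y. hbar A B beta Ly (xs (Suc k)) (ys k) (gs k)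
                        (snd (Dg (xs (Suc k), ys k))) (Dh (ys k)) (ys (Suc k))
                      \<le> hbar A B beta Ly (xs (Suc k)) (ys k) (gs k)
                        (snd (Dg (xs (Suc k), ys k))) (Dh (ys k)) y"
    and gamma_step: "\<And>k. gs (Suc k) = gs k + beta *s (A *v xs (Suc k) + B *v ys (Suc k))"
  shows "convergent (\<lambda>k. aug_lagr g f h A B beta (xs k) (ys k) (gs k))
         \<and> (\<lambda>k. norm (ys (Suc k) - ys k)) \<longlonglongrightarrow> 0
         \<and> (\<lambda>k. norm (xs (Suc k) - xs k)) \<longlonglongrightarrow> 0
         \<and> (\<lambda>k. norm (gs (Suc k) - gs k)) \<longlonglongrightarrow> 0"
proof -
  define Lw where "Lw = Lg + Lh"
  define Cm where "Cm = (Ly + Lw\<^sup>2) / 2"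
  define bl where "bl = beta * lamB"
  have Lw0: "Lw \<ge> 0" using Lg_nonneg Lh_nonneg by (simp add: Lw_def)
  have lp: "lamB > 0" by (rule lamB_pos[OF B_rank lamB_eig])
  have Lyc: "Ly \<ge> Lw + Lw\<^sup>2 + 3" using Ly_cond by (simp add: Lw_def)
  have "Ly + Lw\<^sup>2 > 0" using Lyc Lw0 zero_le_power2[of Lw] by linarith
  then have Cmp: "Cm > 0" by (simp add: Cm_def)
  have mx: "x \<le> Max {(Lw + Ly + 2) / lamB, 3 * (Lw\<^sup>2 + Ly\<^sup>2) / (lamB * Cm), 3 * Ly\<^sup>2 / lamB}"
    if "x \<in> {(Lw + Ly + 2) / lamB, 3 * (Lw\<^sup>2 + Ly\<^sup>2) / (lamB * Cm), 3 * Ly\<^sup>2 / lamB}" for x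
    using that by (intro Max_ge) auto
  have bc: "beta \<ge> Max {(Lw + Ly + 2) / lamB, 3 * (Lw\<^sup>2 + Ly\<^sup>2) / (lamB * Cm), 3 * Ly\<^sup>2 / lamB}"
    using beta_cond by (simp add: Lw_def Cm_def)
  have b1: "bl \<ge> Lw + Ly + 2"
    using order_trans[OF mx[of "(Lw + Ly + 2) / lamB"] bc] lp by (simp add: bl_def pos_divide_le_eq)
  have b2: "bl * Cm \<ge> 3 * (Lw\<^sup>2 + Ly\<^sup>2)"
    using order_trans[OF mx[of "3 * (Lw\<^sup>2 + Ly\<^sup>2) / (lamB * Cm)"] bc] lp Cmp
    by (simp add: bl_def pos_divide_le_eq mult.assoc)
  have b3: "bl \<ge> 3 * Ly\<^sup>2"
    using order_trans[OF mx[of "3 * Ly\<^sup>2 / lamB"] bc] lp by (simp add: bl_def pos_divide_le_eq)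
  have Ab: "\<And>v. (norm (A *v v))\<^sup>2 \<le> LA * (norm v)\<^sup>2" by (rule A_bound[OF LA_max])
  have Bb: "\<And>v. lamB * (norm v)\<^sup>2 \<le> (norm (B *v v))\<^sup>2" by (rule B_bound[OF lamB_min])
  have gdesc: "\<And>u d. \<bar>g (u + d) - g u - Dg u \<bullet> d\<bar> \<le> Lg * (norm d)\<^sup>2"
    by (rule descent[OF g_grad g_lip Lg_nonneg])
  have hdesc: "\<And>u d. \<bar>h (u + d) - h u - Dh u \<bullet> d\<bar> \<le> Lh * (norm d)\<^sup>2"
    by (rule descent[OF h_grad h_lip Lh_nonneg])
  define Lk where "Lk k = aug_lagr g f h A B beta (xs k) (ys k) (gs k)" for k
  define X where "X k = (norm (xs (Suc k) - xs k))\<^sup>2" for k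
  define D where "D k = (norm (ys (Suc k) - ys k))\<^sup>2" for k
  define Gm where "Gm k = (norm (gs (Suc k) - gs k))\<^sup>2" for k
  define Gy where "Gy k = snd (Dg (xs (Suc k), ys k)) + Dh (ys k)" for k
  have s1: "aug_lagr g f h A B beta (xs (Suc k)) (ys k) (gs k) \<le> Lk k - (Lx / 2 - Lg - beta * LA / 2) * X k" for k
  proof -
    have "g (xs (Suc k), ys k) \<le> g (xs k, ys k) + fst (Dg (xs k, ys k)) \<bullet> (xs (Suc k) - xs k)
           + Lg * (norm (xs (Suc k) - xs k))\<^sup>2"
      using gdesc[of "(xs k, ys k)" "(xs (Suc k) - xs k, 0)"] by (simp add: inner_Pair_0)
    from step1[OF this Ab x_step[of k "xs k"] pos(3)] show ?thesis by (simp add: Lk_def X_def)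
  qed
  have s2desc: "g (xs (Suc k), ys (Suc k)) + h (ys (Suc k)) \<le> g (xs (Suc k), ys k) + h (ys k)
       + (snd (Dg (xs (Suc k), ys k)) + Dh (ys k)) \<bullet> (ys (Suc k) - ys k) + Lw * (norm (ys (Suc k) - ys k))\<^sup>2" for k
  proof -
    have "g (xs (Suc k), ys (Suc k)) \<le> g (xs (Suc k), ys k) + snd (Dg (xs (Suc k), ys k)) \<bullet> (ys (Suc k) - ys k)
           + Lg * (norm (ys (Suc k) - ys k))\<^sup>2"
      using gdesc[of "(xs (Suc k), ys k)" "(0, ys (Suc k) - ys k)"] by (simp add: inner_Pair_0)
    moreover have "h (ys (Suc k)) \<le> h (ys k) + Dh (ys k) \<bullet> (ys (Suc k) - ys k) + Lh * (norm (ys (Suc k) - ys k))\<^sup>2"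
      using hdesc[of "ys k" "ys (Suc k) - ys k"] by simp
    ultimately show ?thesis by (simp add: Lw_def inner_add_left algebra_simps)
  qed
  have s2a: "transpose B *v gs (Suc k) = - (Ly *\<^sub>R (ys (Suc k) - ys k) + Gy k)" for k
    using step2(1)[OF y_step gamma_step Bb s2desc pos(3)] by (simp add: Gy_def)
  have s2b: "aug_lagr g f h A B beta (xs (Suc k)) (ys (Suc k)) (gs k) \<le> aug_lagr g f h A B beta (xs (Suc k)) (ys k) (gs k)
           - (Ly - Lw + bl / 2) * D k" for k
    using step2(2)[OF y_step gamma_step Bb s2desc pos(3)] by (simp add: D_def bl_def)
  have s3: "Lk (Suc k) = aug_lagr g f h A B beta (xs (Suc k)) (ys (Suc k)) (gs k) + Gm k / beta" for k
  proof -
    define r where "r = A *v xs (Suc k) + B *v ys (Suc k)"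
    have d: "gs (Suc k) - gs k = beta *\<^sub>R r" by (simp add: gamma_step r_def scalar_mult_eq_scaleR)
    have "Gm k / beta = beta * (norm r)\<^sup>2" using pos(3)
      by (simp add: Gm_def d power_mult_distrib power2_eq_square)
    moreover have "(norm r)\<^sup>2 = r \<bullet> r" by (rule power2_norm_eq_inner)
    ultimately have "Gm k / beta = beta * (r \<bullet> r)" by simp
    moreover have "gs (Suc k) \<bullet> r = gs k \<bullet> r + beta * (r \<bullet> r)"
      using d by (metis add_diff_cancel_left' diff_add_cancel inner_add_left inner_scaleR_left)
    ultimately show ?thesis by (simp add: Lk_def aug_lagr_def r_def[symmetric])
  qed
  have rg: "\<exists>u. gs (Suc k) - gs k = B *v u" for k
  proof -
    have "A *v xs (Suc k) \<in> range (\<lambda>y. B *v y)" using img by blast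
    then obtain z where z: "A *v xs (Suc k) = B *v z" by blast
    have "gs (Suc k) - gs k = B *v (beta *\<^sub>R (z + ys (Suc k)))"
      by (simp add: gamma_step z scalar_mult_eq_scaleR matrix_vector_mult_scaleR matrix_vector_right_distrib)
    then show ?thesis by blast
  qed
  have s6: "lamB * Gm (Suc k) \<le> 3 * (Ly\<^sup>2 * D (Suc k) + Ly\<^sup>2 * D k + Lw\<^sup>2 * (X (Suc k) + D k))" for k
  proof -
    define dy1 where "dy1 = ys (Suc (Suc k)) - ys (Suc k)"
    define dy0 where "dy0 = ys (Suc k) - ys k"
    define dx1 where "dx1 = xs (Suc (Suc k)) - xs (Suc k)"
    define N where "N = norm (dx1, dy0)"
    obtain u where u: "gs (Suc (Suc k)) - gs (Suc k) = B *v u" using rg by blast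
    have b1: "lamB * Gm (Suc k) \<le> (norm (transpose B *v (gs (Suc (Suc k)) - gs (Suc k))))\<^sup>2"
      using BT_bound[OF Bb lp u] by (simp add: Gm_def)
    have eq: "transpose B *v (gs (Suc (Suc k)) - gs (Suc k)) = - (Ly *\<^sub>R dy1) + Ly *\<^sub>R dy0 - (Gy (Suc k) - Gy k)"
      unfolding matrix_vector_mult_diff_distrib s2a dy1_def dy0_def by (simp add: algebra_simps)
    have pd: "(xs (Suc (Suc k)), ys (Suc k)) - (xs (Suc k), ys k) = (dx1, dy0)" by (simp add: dx1_def dy0_def)
    have n1: "norm (snd (Dg (xs (Suc (Suc k)), ys (Suc k))) - snd (Dg (xs (Suc k), ys k))) \<le> Lg * N"
      using norm_snd_diff[of "Dg (xs (Suc (Suc k)), ys (Suc k))" "Dg (xs (Suc k), ys k)"]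
        g_lip[of "(xs (Suc (Suc k)), ys (Suc k))" "(xs (Suc k), ys k)"] unfolding pd N_def by linarith
    have dyN: "norm dy0 \<le> N" unfolding N_def by (rule norm_snd_le)
    have n2: "norm (Dh (ys (Suc k)) - Dh (ys k)) \<le> Lh * N"
      using h_lip[of "ys (Suc k)" "ys k"] mult_left_mono[OF dyN Lh_nonneg] unfolding dy0_def by linarith
    have nG: "norm (Gy (Suc k) - Gy k) \<le> Lw * N"
    proof -
      have e: "Gy (Suc k) - Gy k = (snd (Dg (xs (Suc (Suc k)), ys (Suc k))) - snd (Dg (xs (Suc k), ys k)))
          + (Dh (ys (Suc k)) - Dh (ys k))" by (simp add: Gy_def algebra_simps)
      have "norm (Gy (Suc k) - Gy k) \<le> norm (snd (Dg (xs (Suc (Suc k)), ys (Suc k))) - snd (Dg (xs (Suc k), ys k)))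
          + norm (Dh (ys (Suc k)) - Dh (ys k))" unfolding e by (rule norm_triangle_ineq)
      then have "norm (Gy (Suc k) - Gy k) \<le> Lg * N + Lh * N" using n1 n2 by linarith
      then show ?thesis by (simp add: Lw_def algebra_simps)
    qed
    have nT: "norm (transpose B *v (gs (Suc (Suc k)) - gs (Suc k))) \<le> Ly * norm dy1 + Ly * norm dy0 + Lw * N"
    proof -
      have "norm (- (Ly *\<^sub>R dy1) + Ly *\<^sub>R dy0 - (Gy (Suc k) - Gy k))
          \<le> norm (- (Ly *\<^sub>R dy1)) + norm (Ly *\<^sub>R dy0) + norm (Gy (Suc k) - Gy k)"
        using norm_triangle_ineq4[of "- (Ly *\<^sub>R dy1) + Ly *\<^sub>R dy0" "Gy (Suc k) - Gy k"]
          norm_triangle_ineq[of "- (Ly *\<^sub>R dy1)" "Ly *\<^sub>R dy0"] by linarith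
      also have "\<dots> \<le> Ly * norm dy1 + Ly * norm dy0 + Lw * N" using nG pos(2) by simp
      finally show ?thesis unfolding eq .
    qed
    have "(norm (transpose B *v (gs (Suc (Suc k)) - gs (Suc k))))\<^sup>2 \<le> (Ly * norm dy1 + Ly * norm dy0 + Lw * N)\<^sup>2"
      using nT by (simp add: power_mono)
    also have "\<dots> \<le> 3 * ((Ly * norm dy1)\<^sup>2 + (Ly * norm dy0)\<^sup>2 + (Lw * N)\<^sup>2)" by (rule sq3)
    also have "\<dots> = 3 * (Ly\<^sup>2 * D (Suc k) + Ly\<^sup>2 * D k + Lw\<^sup>2 * (X (Suc k) + D k))"
      by (simp add: N_def norm_Pair power_mult_distrib D_def X_def dy1_def dy0_def dx1_def)
    finally show ?thesis using b1 by linarith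
  qed
  define Phi where "Phi k = Lk (Suc k) + Cm * D k" for k
  define c1 where "c1 = (4 * Lw\<^sup>2 + 1 - Lw) / 2"
  have c1p: "c1 > 0"
  proof -
    have "(Lw - 1)\<^sup>2 \<ge> 0" by simp
    then have "Lw\<^sup>2 \<ge> 2 * Lw - 1" by (simp add: power2_diff)
    then have "4 * Lw\<^sup>2 + 1 - Lw > 0" using Lw0 zero_le_power2[of Lw] by linarith
    then show ?thesis unfolding c1_def by simp
  qed
  have XDnn: "X k \<ge> 0" "D k \<ge> 0" "Gm k \<ge> 0" for k by (simp_all add: X_def D_def Gm_def)
  have lyap: "Phi (Suc k) \<le> Phi k - c1 * X (Suc k) - D (Suc k)" for k
  proof -
    have dec: "Lk (Suc (Suc k)) \<le> Lk (Suc k) - (Lx / 2 - Lg - beta * LA / 2) * X (Suc k)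
        - (Ly - Lw + bl / 2) * D (Suc k) + Gm (Suc k) / beta"
      using s1[of "Suc k"] s2b[of "Suc k"] s3[of "Suc k"] by linarith
    have cx: "Lx / 2 - Lg - beta * LA / 2 \<ge> (6 * Lw\<^sup>2 + 1 - Lw) / 2"
      using lin3[of "Lg" "beta * LA" "Lw\<^sup>2" Lx Lw] Lx_cond Lh_nonneg by (simp add: Lw_def)
    have "Lk (Suc (Suc k)) + Cm * D (Suc k) \<le> Lk (Suc k) + Cm * D k - c1 * X (Suc k) - D (Suc k)"
      unfolding c1_def
      by (rule lyap_ineq[OF Lw0 Lyc Cm_def bl_def pos(3) lp b1 b2 b3 XDnn(1) XDnn(2) XDnn(2) cx order_refl dec s6])
    then show ?thesis by (simp add: Phi_def)
  qed
  obtain c where c: "\<And>x y. A *v x + B *v y = 0 \<Longrightarrow> c \<le> g (x, y) + f x + h y" using lower_bdd by blast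
  have lowb: "Phi k \<ge> c" for k
  proof -
    define x where "x = xs (Suc k)"
    define y where "y = ys (Suc k)"
    define dy where "dy = ys (Suc k) - ys k"
    have "A *v x \<in> range (\<lambda>y. B *v y)" using img by blast
    then obtain z where z: "A *v x = B *v z" by blast
    define e where "e = y + z"
    have feas: "A *v x + B *v (- z) = 0"
    proof -
      have "B *v (- z) = - (B *v z)" using matrix_vector_mult_diff_distrib[of B 0 z] by simp
      then show ?thesis using z by simp
    qed
    have cz: "c \<le> g (x, - z) + f x + h (- z)" by (rule c[OF feas])
    have rB: "A *v x + B *v y = B *v e" by (simp add: e_def z matrix_vector_right_distrib add.commute)
    have gam: "gs (Suc k) \<bullet> (B *v e) = - ((Ly *\<^sub>R dy + Gy k) \<bullet> e)"
    proof -
      have "gs (Suc k) \<bullet> (B *v e) = (transpose B *v gs (Suc k)) \<bullet> e" by (rule inner_transpose[symmetric])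
      also have "\<dots> = (- (Ly *\<^sub>R dy + Gy k)) \<bullet> e" unfolding s2a dy_def ..
      finally show ?thesis by (simp only: inner_minus_left)
    qed
    have ze: "- z = y - e" by (simp add: e_def)
    have gd: "g (x, - z) \<le> g (x, y) - snd (Dg (x, y)) \<bullet> e + Lg * (norm e)\<^sup>2"
      using gdesc[of "(x, y)" "(0, - e)"] unfolding ze by (simp add: inner_Pair_0)
    have hd: "h (- z) \<le> h y - Dh y \<bullet> e + Lh * (norm e)\<^sup>2"
      using hdesc[of y "- e"] unfolding ze by simp
    define V where "V = snd (Dg (x, y)) + Dh y - Gy k - Ly *\<^sub>R dy"
    have Ve: "V \<bullet> e = snd (Dg (x, y)) \<bullet> e + Dh y \<bullet> e - (Ly *\<^sub>R dy + Gy k) \<bullet> e"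
      by (simp add: V_def inner_diff_left inner_add_left algebra_simps)
    have nV: "norm V \<le> (Lw + Ly) * norm dy"
    proof -
      have pd: "(x, y) - (x, ys k) = (0, dy)" by (simp add: dy_def y_def)
      have n1: "norm (snd (Dg (x, y)) - snd (Dg (x, ys k))) \<le> Lg * norm dy"
        using norm_snd_diff[of "Dg (x, y)" "Dg (x, ys k)"] g_lip[of "(x, y)" "(x, ys k)"] unfolding pd by simp
      have n2: "norm (Dh y - Dh (ys k)) \<le> Lh * norm dy" using h_lip[of y "ys k"] by (simp add: dy_def y_def)
      have eV: "V = (snd (Dg (x, y)) - snd (Dg (x, ys k))) + (Dh y - Dh (ys k)) - Ly *\<^sub>R dy"
        by (simp add: V_def Gy_def x_def algebra_simps)
      have "norm V \<le> norm ((snd (Dg (x, y)) - snd (Dg (x, ys k))) + (Dh y - Dh (ys k))) + norm (Ly *\<^sub>R dy)"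
        unfolding eV by (rule norm_triangle_ineq4)
      moreover have "norm ((snd (Dg (x, y)) - snd (Dg (x, ys k))) + (Dh y - Dh (ys k)))
          \<le> norm (snd (Dg (x, y)) - snd (Dg (x, ys k))) + norm (Dh y - Dh (ys k))" by (rule norm_triangle_ineq)
      moreover have "norm (Ly *\<^sub>R dy) = Ly * norm dy" using pos(2) by simp
      moreover have "(Lw + Ly) * norm dy = Lg * norm dy + Lh * norm dy + Ly * norm dy" by (simp add: Lw_def algebra_simps)
      ultimately show ?thesis using n1 n2 by linarith
    qed
    have Vlow: "V \<bullet> e \<ge> - ((Lw + Ly) * norm dy * norm e)"
    proof -
      have "\<bar>V \<bullet> e\<bar> \<le> norm V * norm e" by (rule Cauchy_Schwarz_ineq2)
      also have "\<dots> \<le> (Lw + Ly) * norm dy * norm e" using nV by (simp add: mult_right_mono)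
      finally show ?thesis by linarith
    qed
    have Be: "beta / 2 * (norm (B *v e))\<^sup>2 \<ge> bl / 2 * (norm e)\<^sup>2"
      using Bb[of e] pos(3) by (simp add: bl_def)
    have Lk_eq: "Lk (Suc k) = g (x, y) + f x + h y + gs (Suc k) \<bullet> (B *v e) + beta / 2 * (norm (B *v e))\<^sup>2"
      unfolding Lk_def aug_lagr_def x_def[symmetric] y_def[symmetric] rB ..
    have q: "Cm * (norm dy)\<^sup>2 - (Lw + Ly) * norm dy * norm e + (bl / 2 - Lw) * (norm e)\<^sup>2 \<ge> 0"
      by (rule lower_quad[OF Lw0 Lyc Cm_def b1 b2])
    have De: "D k = (norm dy)\<^sup>2" by (simp add: D_def dy_def)
    have lw: "Lw * (norm e)\<^sup>2 = Lg * (norm e)\<^sup>2 + Lh * (norm e)\<^sup>2" by (simp add: Lw_def algebra_simps)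
    have qe: "(bl / 2 - Lw) * (norm e)\<^sup>2 = bl / 2 * (norm e)\<^sup>2 - Lw * (norm e)\<^sup>2" by (simp add: algebra_simps)
    show ?thesis unfolding Phi_def Lk_eq De gam using cz gd hd Ve Vlow Be q lw qe by linarith
  qed
  have decs: "decseq Phi"
  proof -
    have "Phi (Suc k) \<le> Phi k" for k
      using lyap[of k] c1p XDnn[of "Suc k"] mult_nonneg_nonneg[of c1 "X (Suc k)"] by linarith
    then show ?thesis by (simp add: decseq_Suc_iff)
  qed
  obtain l where lim: "Phi \<longlonglongrightarrow> l" using decseq_convergent[OF decs] lowb by blast
  have dl: "(\<lambda>k. Phi k - Phi (Suc k)) \<longlonglongrightarrow> 0"
    using tendsto_diff[OF lim LIMSEQ_Suc[OF lim]] by simp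
  have Xs: "(\<lambda>k. X (Suc k)) \<longlonglongrightarrow> 0"
  proof (rule tendsto_sandwich[of "\<lambda>_. 0" _ _ "\<lambda>k. (Phi k - Phi (Suc k)) / c1"])
    show "\<forall>\<^sub>F n in sequentially. 0 \<le> X (Suc n)" using XDnn by simp
    show "\<forall>\<^sub>F n in sequentially. X (Suc n) \<le> (Phi n - Phi (Suc n)) / c1"
    proof (intro always_eventually allI)
      fix n
      have "c1 * X (Suc n) \<le> Phi n - Phi (Suc n)" using lyap[of n] XDnn[of "Suc n"] by linarith
      then show "X (Suc n) \<le> (Phi n - Phi (Suc n)) / c1" using c1p by (simp add: field_simps)
    qed
    show "(\<lambda>_. 0) \<longlonglongrightarrow> (0::real)" by simp
    show "(\<lambda>k. (Phi k - Phi (Suc k)) / c1) \<longlonglongrightarrow> 0" using tendsto_divide_zero[OF dl] by simp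
  qed
  have Ds: "(\<lambda>k. D (Suc k)) \<longlonglongrightarrow> 0"
  proof (rule tendsto_sandwich[of "\<lambda>_. 0" _ _ "\<lambda>k. Phi k - Phi (Suc k)"])
    show "\<forall>\<^sub>F n in sequentially. 0 \<le> D (Suc n)" using XDnn by simp
    show "\<forall>\<^sub>F n in sequentially. D (Suc n) \<le> Phi n - Phi (Suc n)"
      using lyap c1p XDnn mult_nonneg_nonneg[of c1] by (intro always_eventually allI) (smt (verit))
    show "(\<lambda>_. 0) \<longlonglongrightarrow> (0::real)" by simp
    show "(\<lambda>k. Phi k - Phi (Suc k)) \<longlonglongrightarrow> 0" by (rule dl)
  qed
  have X0: "X \<longlonglongrightarrow> 0" by (rule LIMSEQ_imp_Suc[OF Xs])
  have D0: "D \<longlonglongrightarrow> 0" by (rule LIMSEQ_imp_Suc[OF Ds])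
  have Gs: "(\<lambda>k. Gm (Suc k)) \<longlonglongrightarrow> 0"
  proof (rule tendsto_sandwich[of "\<lambda>_. 0" _ _ "\<lambda>k. 3 * (Ly\<^sup>2 * D (Suc k) + Ly\<^sup>2 * D k + Lw\<^sup>2 * (X (Suc k) + D k)) / lamB"])
    show "\<forall>\<^sub>F n in sequentially. 0 \<le> Gm (Suc n)" using XDnn by simp
    show "\<forall>\<^sub>F n in sequentially. Gm (Suc n) \<le> 3 * (Ly\<^sup>2 * D (Suc n) + Ly\<^sup>2 * D n + Lw\<^sup>2 * (X (Suc n) + D n)) / lamB"
      using s6 lp by (intro always_eventually allI) (simp add: field_simps mult.commute)
    show "(\<lambda>_. 0) \<longlonglongrightarrow> (0::real)" by simp
    show "(\<lambda>k. 3 * (Ly\<^sup>2 * D (Suc k) + Ly\<^sup>2 * D k + Lw\<^sup>2 * (X (Suc k) + D k)) / lamB) \<longlonglongrightarrow> 0"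
      using Ds D0 Xs lp by (auto intro!: tendsto_eq_intros)
  qed
  have G0: "Gm \<longlonglongrightarrow> 0" by (rule LIMSEQ_imp_Suc[OF Gs])
  have c1': "(\<lambda>k. norm (ys (Suc k) - ys k)) \<longlonglongrightarrow> 0" using tendsto_real_sqrt[OF D0] by (simp add: D_def)
  have c2': "(\<lambda>k. norm (xs (Suc k) - xs k)) \<longlonglongrightarrow> 0" using tendsto_real_sqrt[OF X0] by (simp add: X_def)
  have c3': "(\<lambda>k. norm (gs (Suc k) - gs k)) \<longlonglongrightarrow> 0" using tendsto_real_sqrt[OF G0] by (simp add: Gm_def)
  have "(\<lambda>k. Phi k - Cm * D k) \<longlonglongrightarrow> l - Cm * 0" by (intro tendsto_intros lim D0)
  then have "(\<lambda>k. Lk (Suc k)) \<longlonglongrightarrow> l" by (simp add: Phi_def)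
  then have "convergent (\<lambda>k. Lk (Suc k))" by (auto simp: convergent_def)
  then have "convergent Lk" by (simp add: convergent_Suc_iff)
  moreover have "Lk = (\<lambda>k. aug_lagr g f h A B beta (xs k) (ys k) (gs k))" by (simp add: fun_eq_iff Lk_def)
  ultimately show ?thesis using c1' c2' c3' by simp
qed

end
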